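(* Let $0\le N\le M-1$, let $x=(x_1<\dots<x_N)$ and $y=(y_1<\dots<y_{N+1})$ be subsets of $\{1,\dots,M\}$, and likewise $\overline{x}=(\overline{x_1}<\dots<\overline{x_N})$, $\overline{y}=(\overline{y_1}<\dots<\overline{y_{N+1}})$. Then \begin{align*} \langle y_1\cdots y_{N+1}|B(u)|x_1\cdots x_N\rangle&=G_{y,x}(u),& \langle\overline{x_1}\cdots\overline{x_N}|B(u)|\overline{y_1}\cdots\overline{y_{N+1}}\rangle&=H_{\overline{y},\overline{x}}(u),\\ \langle x_1\cdots x_N|C(u)|y_1\cdots y_{N+1}\rangle&=\overline{G}_{y,x}(u),& \langle\overline{y_1}\cdots\overline{y_{N+1}}|C(u)|\overline{x_1}\cdots\overline{x_N}\rangle&=\overline{H}_{\overline{y},\overline{x}}(u). \end{align*}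
   Context: Fix complex parameters $t,a,b,c,d,e,f$, all nonzero, with $t\neq1$, satisfying $cd+af=0$ and $tcd+be=0$. The $L$-operator $L_{aj}(u)$ on $W_a\otimes V_j$ ($\cong\mathbb{C}^2\otimes\mathbb{C}^2$, basis $|0\rangle,|1\rangle$) has matrix elements $[L(u)]^{\gamma\delta}_{\alpha\beta}={}_a\langle\gamma|{}_j\langle\delta|L_{aj}(u)|\alpha\rangle_a|\beta\rangle_j$: $[L]^{00}_{00}=au+b$, $[L]^{01}_{01}=atu+b$, $[L]^{01}_{10}=(1-t)cu$, $[L]^{10}_{01}=(1-t)d$, $[L]^{10}_{10}=eu+f$, $[L]^{11}_{11}=eu+tf$, all others $0$. Monodromy $T_a(u)=L_{aM}(u)\cdots L_{a1}(u)$, $B(u)={}_a\langle0|T_a(u)|1\rangle_a$, $C(u)={}_a\langle1|T_a(u)|0\rangle_a$, acting on $V_1\otimes\cdots\otimes V_M$. $|x_1\cdots x_N\rangle$ is the basis tensor with $|1\rangle$ at sites $x_j$ and $|0\rangle$ elsewhere; $|\overline{x_1}\cdots\overline{x_N}\rangle$ is the basis tensor with $|0\rangle$ at sites $\overline{x_j}$ and $|1\rangle$ elsewhere; bras are duals. For strictly increasing $y=(y_1<\dots<y_{N+1})$, $x=(x_1<\dots<x_N)$ write $y\succ x$ if $y_1\le x_1\le y_2\le x_2\le\cdots\le x_N\le y_{N+1}$. For $y\succ x$, let $p_1<\dots<p_{k+1}$ be the $y_j$ ($1\le j\le N+1$) with $y_j\notin\{x_j,x_{j-1}\}$ (ignoring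 undefined $x_0,x_{N+1}$), let $q_1<\dots<q_k$ be the $x_j$ with $x_j\notin\{y_j,y_{j+1}\}$, and set $q_0=0$, $q_{k+1}=M+1$. For integers $\alpha<\beta$ put $n_x(\alpha,\beta)=\#\{\ell:\alpha<x_\ell<\beta\}$. Define $G_{y,x}(u)=((1-t)cu)^{k+1}((1-t)d)^k\prod_{j=1}^{k+1}(atu+b)^{n_x(p_j,q_j)}(au+b)^{q_j-p_j-1-n_x(p_j,q_j)}(eu+tf)^{n_x(q_{j-1},p_j)}(eu+f)^{p_j-q_{j-1}-1-n_x(q_{j-1},p_j)}$, $\overline{G}_{y,x}(u)=((1-t)d)^{k+1}((1-t)cu)^k\prod_{j=1}^{k+1}(eu+tf)^{n_x(p_j,q_j)}(eu+f)^{q_j-p_j-1-n_x(p_j,q_j)}(atu+b)^{n_x(q_{j-1},p_j)}(au+b)^{p_j-q_{j-1}-1-n_x(q_{j-1},p_j)}$, and $G_{y,x}(u)=\overline{G}_{y,x}(u)=0$ if not $y\succ x$. For hole sequences $\overline{y},\overline{x}$, with $\overline{y}\succ\overline{x}$, $\overline{p_j},\overline{q_j}$ and $n_{\overline{x}}$ defined in the same way from $\overline{y},\overline{x}$ ($\overline{q_0}=0$, $\overline{q_{k+1}}=M+1$), define $H_{\overline{y},\overline{x}}(u)=((1-t)cu)^{k+1}((1-t)d)^k\prod_{j=1}^{k+1}(au+b)^{n_{\overline{x}}(\overline{p_j},\overline{q_j})}(atu+b)^{\overline{q_j}-\overline{p_j}-1-n_{\overline{x}}(\overline{p_j},\overline{q_j})}(eu+f)^{n_{\overline{x}}(\overline{q_{j-1}},\overline{p_j})}(eu+tf)^{\overline{p_j}-\overline{q_{j-1}}-1-n_{\overline{x}}(\overline{q_{j-1}},\overline{p_j})}$,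 $\overline{H}_{\overline{y},\overline{x}}(u)=((1-t)d)^{k+1}((1-t)cu)^k\prod_{j=1}^{k+1}(eu+f)^{n_{\overline{x}}(\overline{p_j},\overline{q_j})}(eu+tf)^{\overline{q_j}-\overline{p_j}-1-n_{\overline{x}}(\overline{p_j},\overline{q_j})}(au+b)^{n_{\overline{x}}(\overline{q_{j-1}},\overline{p_j})}(atu+b)^{\overline{p_j}-\overline{q_{j-1}}-1-n_{\overline{x}}(\overline{q_{j-1}},\overline{p_j})}$, and both are $0$ if not $\overline{y}\succ\overline{x}$. *)

theory Defs
  imports Complex_Main
begin

text \<open>Local states: False = |0>, True = |1>.
  Lent t a b c d e f u g dl al be is the matrix element
  [L(u)]^{g dl}_{al be} = <g|_a <dl|_j L_{aj}(u) |al>_a |be>_j.\<close>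
definition Lent :: "complex \<Rightarrow> complex \<Rightarrow> complex \<Rightarrow> complex \<Rightarrow> complex \<Rightarrow> complex \<Rightarrow> complex
    \<Rightarrow> complex \<Rightarrow> bool \<Rightarrow> bool \<Rightarrow> bool \<Rightarrow> bool \<Rightarrow> complex" where
  "Lent t a b c d e f u g dl al be =
    (if \<not> al \<and> \<not> be \<and> \<not> g \<and> \<not> dl then a*u + b
     else if \<not> al \<and> be \<and> \<not> g \<and> dl then a*t*u + b
     else if al \<and> \<not> be \<and> \<not> g \<and> dl then (1 - t)*c*u
     else if \<not> al \<and> be \<and> g \<and> \<not> dl then (1 - t)*d
     else if al \<and> \<not> be \<and> g \<and> \<not> dl then e*u + f
     else if al \<and> be \<and> g \<and> dl then e*u + t*f
     else 0)"

text \<open>Basis states of V_1 x ... x V_M are encoded by the set of sites carrying |1>.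
  Tpart ... k out inn g al = <out| <g|_a L_{ak}(u) ... L_{a1}(u) |al>_a |inn>,
  restricted to sites 1..k (the matrix element factorises site by site).\<close>
fun Tpart :: "complex \<Rightarrow> complex \<Rightarrow> complex \<Rightarrow> complex \<Rightarrow> complex \<Rightarrow> complex \<Rightarrow> complex
    \<Rightarrow> complex \<Rightarrow> nat \<Rightarrow> nat set \<Rightarrow> nat set \<Rightarrow> bool \<Rightarrow> bool \<Rightarrow> complex" where
  "Tpart t a b c d e f u 0 out inn g al = (if g = al then 1 else 0)"
| "Tpart t a b c d e f u (Suc k) out inn g al =
     (\<Sum>s\<in>(UNIV::bool set). Lent t a b c d e f u g (Suc k \<in> out) s (Suc k \<in> inn)
        * Tpart t a b c d e f u k out inn s al)"

text \<open><out|B(u)|inn> and <out|C(u)|inn> for the monodromy T_a(u) = L_{aM}(u)...L_{a1}(u).\<close>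
definition Bel :: "complex \<Rightarrow> complex \<Rightarrow> complex \<Rightarrow> complex \<Rightarrow> complex \<Rightarrow> complex \<Rightarrow> complex
    \<Rightarrow> nat \<Rightarrow> complex \<Rightarrow> nat set \<Rightarrow> nat set \<Rightarrow> complex" where
  "Bel t a b c d e f M u out inn = Tpart t a b c d e f u M out inn False True"

definition Cel :: "complex \<Rightarrow> complex \<Rightarrow> complex \<Rightarrow> complex \<Rightarrow> complex \<Rightarrow> complex \<Rightarrow> complex
    \<Rightarrow> nat \<Rightarrow> complex \<Rightarrow> nat set \<Rightarrow> nat set \<Rightarrow> complex" where
  "Cel t a b c d e f M u out inn = Tpart t a b c d e f u M out inn True False"

text \<open>|x_1...x_N> : particles (|1>) at the x_j; |bar x_1 ... bar x_N> : holes (|0>) at the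
  given sites and |1> at all other sites of {1..M}.\<close>
definition particles :: "nat list \<Rightarrow> nat set" where
  "particles xs = set xs"

definition holes :: "nat \<Rightarrow> nat list \<Rightarrow> nat set" where
  "holes M xs = {1..M} - set xs"

text \<open>Lists are 0-indexed: y!i is y_{i+1}, x!i is x_{i+1}.\<close>
definition interlace :: "nat list \<Rightarrow> nat list \<Rightarrow> bool" where
  "interlace y x \<longleftrightarrow> length y = Suc (length x) \<and>
     (\<forall>i < length x. y!i \<le> x!i \<and> x!i \<le> y!(Suc i))"

definition pseq :: "nat list \<Rightarrow> nat list \<Rightarrow> nat list" where
  "pseq y x = [y!i. i \<leftarrow> [0..<length y],
      \<not> (i < length x \<and> y!i = x!i) \<and> \<not> (1 \<le> i \<and> y!i = x!(i - 1))]"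

definition qseq :: "nat list \<Rightarrow> nat list \<Rightarrow> nat list" where
  "qseq y x = [x!i. i \<leftarrow> [0..<length x], x!i \<noteq> y!i \<and> x!i \<noteq> y!(Suc i)]"

definition ncount :: "nat list \<Rightarrow> nat \<Rightarrow> nat \<Rightarrow> nat" where
  "ncount x al be = card {l. l < length x \<and> al < x!l \<and> x!l < be}"

definition qj :: "nat \<Rightarrow> nat list \<Rightarrow> nat list \<Rightarrow> nat \<Rightarrow> nat" where
  "qj M y x j = (if j = 0 then 0 else if j = Suc (length (qseq y x)) then M + 1
                 else qseq y x ! (j - 1))"

definition pj :: "nat list \<Rightarrow> nat list \<Rightarrow> nat \<Rightarrow> nat" where
  "pj y x j = pseq y x ! (j - 1)"

definition wprod :: "nat \<Rightarrow> nat list \<Rightarrow> nat list \<Rightarrow> complex \<Rightarrow> complex \<Rightarrow> complex \<Rightarrow> complex \<Rightarrow> complex" where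
  "wprod M y x w1 w2 w3 w4 =
    (\<Prod>j\<in>{1..Suc (length (qseq y x))}.
       w1 ^ (ncount x (pj y x j) (qj M y x j))
     * w2 ^ (qj M y x j - pj y x j - 1 - ncount x (pj y x j) (qj M y x j))
     * w3 ^ (ncount x (qj M y x (j - 1)) (pj y x j))
     * w4 ^ (pj y x j - qj M y x (j - 1) - 1 - ncount x (qj M y x (j - 1)) (pj y x j)))"

definition Gf :: "complex \<Rightarrow> complex \<Rightarrow> complex \<Rightarrow> complex \<Rightarrow> complex \<Rightarrow> complex \<Rightarrow> complex
    \<Rightarrow> nat \<Rightarrow> nat list \<Rightarrow> nat list \<Rightarrow> complex \<Rightarrow> complex" where
  "Gf t a b c d e f M y x u = (if interlace y x then
     ((1-t)*c*u) ^ Suc (length (qseq y x)) * ((1-t)*d) ^ length (qseq y x)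
     * wprod M y x (a*t*u+b) (a*u+b) (e*u+t*f) (e*u+f) else 0)"

definition Gbar :: "complex \<Rightarrow> complex \<Rightarrow> complex \<Rightarrow> complex \<Rightarrow> complex \<Rightarrow> complex \<Rightarrow> complex
    \<Rightarrow> nat \<Rightarrow> nat list \<Rightarrow> nat list \<Rightarrow> complex \<Rightarrow> complex" where
  "Gbar t a b c d e f M y x u = (if interlace y x then
     ((1-t)*d) ^ Suc (length (qseq y x)) * ((1-t)*c*u) ^ length (qseq y x)
     * wprod M y x (e*u+t*f) (e*u+f) (a*t*u+b) (a*u+b) else 0)"

definition Hf :: "complex \<Rightarrow> complex \<Rightarrow> complex \<Rightarrow> complex \<Rightarrow> complex \<Rightarrow> complex \<Rightarrow> complex
    \<Rightarrow> nat \<Rightarrow> nat list \<Rightarrow> nat list \<Rightarrow> complex \<Rightarrow> complex" where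
  "Hf t a b c d e f M y x u = (if interlace y x then
     ((1-t)*c*u) ^ Suc (length (qseq y x)) * ((1-t)*d) ^ length (qseq y x)
     * wprod M y x (a*u+b) (a*t*u+b) (e*u+f) (e*u+t*f) else 0)"

definition Hbar :: "complex \<Rightarrow> complex \<Rightarrow> complex \<Rightarrow> complex \<Rightarrow> complex \<Rightarrow> complex \<Rightarrow> complex
    \<Rightarrow> nat \<Rightarrow> nat list \<Rightarrow> nat list \<Rightarrow> complex \<Rightarrow> complex" where
  "Hbar t a b c d e f M y x u = (if interlace y x then
     ((1-t)*d) ^ Suc (length (qseq y x)) * ((1-t)*c*u) ^ length (qseq y x)
     * wprod M y x (e*u+f) (e*u+t*f) (a*u+b) (a*t*u+b) else 0)"

end

theory Submission
  imports Defs
begin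

lemma concat_map_if_single:
  "concat (map (\<lambda>i. if P i then [f i] else []) xs) = map f (filter P xs)"
  by (induction xs) auto

fun TG :: "(nat \<Rightarrow> bool \<Rightarrow> bool \<Rightarrow> complex) \<Rightarrow> nat \<Rightarrow> bool \<Rightarrow> bool \<Rightarrow> complex" where
  "TG w 0 g al = (if g = al then 1 else 0)"
| "TG w (Suc k) g al = (\<Sum>s\<in>(UNIV::bool set). w (Suc k) g s * TG w k s al)"

lemma Tpart_TG:
  "Tpart t a b c d e f u k out inn g al
   = TG (\<lambda>k g s. Lent t a b c d e f u g (k \<in> out) s (k \<in> inn)) k g al"
  by (induction k arbitrary: g) auto

definition wgen :: "nat set \<Rightarrow> nat set \<Rightarrow> bool \<Rightarrow> complex \<Rightarrow> complex \<Rightarrow> complex \<Rightarrow> complex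
   \<Rightarrow> complex \<Rightarrow> complex \<Rightarrow> nat \<Rightarrow> bool \<Rightarrow> bool \<Rightarrow> complex" where
  "wgen Y X v0 cP cQ a1 a2 b1 b2 i g s =
    (if i \<in> Y \<and> i \<notin> X then (if s = v0 \<and> g = (\<not> v0) then cP else 0)
     else if i \<in> X \<and> i \<notin> Y then (if s = (\<not> v0) \<and> g = v0 then cQ else 0)
     else if g \<noteq> s then 0
     else if s = v0 then (if i \<in> X then b1 else b2) else (if i \<in> X then a1 else a2))"

definition Dc :: "nat set \<Rightarrow> nat set \<Rightarrow> nat \<Rightarrow> int" where
  "Dc Y X i = int (card (Y \<inter> {1..i})) - int (card (X \<inter> {1..i}))"

definition auxs :: "nat set \<Rightarrow> nat set \<Rightarrow> bool \<Rightarrow> nat \<Rightarrow> bool" where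
  "auxs Y X v0 i = (if Dc Y X i = 0 then v0 else \<not> v0)"

lemma card_Int_Suc:
  "card (Y \<inter> {1..Suc i}) = card (Y \<inter> {1..i}) + (if Suc i \<in> Y then 1 else 0)"
proof -
  have e: "Y \<inter> {1..Suc i} = (if Suc i \<in> Y then insert (Suc i) (Y \<inter> {1..i}) else Y \<inter> {1..i})"
    by (auto simp: le_Suc_eq)
  show ?thesis unfolding e by auto
qed

lemma Dc_Suc:
  "Dc Y X (Suc i) = Dc Y X i + (if Suc i \<in> Y then 1 else 0) - (if Suc i \<in> X then 1 else 0)"
  unfolding Dc_def card_Int_Suc by auto

lemma Dc_0: "Dc Y X 0 = 0" by (simp add: Dc_def)

lemma sum_bool_sel:
  "(\<Sum>s\<in>(UNIV::bool set). h s * (if V \<and> s = A then P else 0)) = (if V then h A * P else (0::complex))"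
  by (cases A) (auto simp: UNIV_bool)

lemma step_w:
  assumes "Dc Y X k = 0 \<or> Dc Y X k = 1"
  shows "wgen Y X v0 cP cQ a1 a2 b1 b2 (Suc k) g (auxs Y X v0 k)
    = (if (Dc Y X (Suc k) = 0 \<or> Dc Y X (Suc k) = 1) \<and> g = auxs Y X v0 (Suc k)
       then wgen Y X v0 cP cQ a1 a2 b1 b2 (Suc k) (auxs Y X v0 (Suc k)) (auxs Y X v0 k) else 0)"
  using assms unfolding wgen_def auxs_def Dc_Suc[of Y X k] by auto

lemma TG_main:
  assumes w: "\<And>i g s. 1 \<le> i \<Longrightarrow> i \<le> M \<Longrightarrow> w i g s = wgen Y X v0 cP cQ a1 a2 b1 b2 i g s"
  shows "k \<le> M \<Longrightarrow> TG w k g v0 = (if (\<forall>i\<le>k. Dc Y X i = 0 \<or> Dc Y X i = 1) \<and> g = auxs Y X v0 k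
     then (\<Prod>i\<in>{1..k}. wgen Y X v0 cP cQ a1 a2 b1 b2 i (auxs Y X v0 i) (auxs Y X v0 (i - 1))) else 0)"
proof (induction k arbitrary: g)
  case 0
  then show ?case by (auto simp: auxs_def Dc_0)
next
  case (Suc k)
  let ?V = "\<lambda>k. \<forall>i\<le>k. Dc Y X i = 0 \<or> Dc Y X i = 1"
  let ?W = "wgen Y X v0 cP cQ a1 a2 b1 b2"
  let ?P = "\<lambda>k. \<Prod>i\<in>{1..k}. ?W i (auxs Y X v0 i) (auxs Y X v0 (i - 1))"
  have "TG w (Suc k) g v0 = (\<Sum>s\<in>(UNIV::bool set). ?W (Suc k) g s * (if ?V k \<and> s = auxs Y X v0 k then ?P k else 0))"
    using Suc by (simp add: w)
  also have "\<dots> = (if ?V k then ?W (Suc k) g (auxs Y X v0 k) * ?P k else 0)"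
    by (rule sum_bool_sel)
  also have "\<dots> = (if ?V (Suc k) \<and> g = auxs Y X v0 (Suc k) then ?P (Suc k) else 0)"
  proof (cases "?V k")
    case True
    have "?V (Suc k) = (Dc Y X (Suc k) = 0 \<or> Dc Y X (Suc k) = 1)" using True by (auto simp: le_Suc_eq)
    moreover have "?P (Suc k) = ?W (Suc k) (auxs Y X v0 (Suc k)) (auxs Y X v0 k) * ?P k"
      by (simp add: prod.cl_ivl_Suc)
    ultimately show ?thesis using True step_w[of Y X k v0 cP cQ a1 a2 b1 b2 g] by auto
  next
    case False
    then show ?thesis by (auto simp: le_Suc_eq)
  qed
  finally show ?case .
qed


definition cnt :: "nat list \<Rightarrow> nat \<Rightarrow> nat" where
  "cnt l i = card (set l \<inter> {1..i})"

lemma sw_less: "sorted_wrt (<) l \<Longrightarrow> i < j \<Longrightarrow> j < length l \<Longrightarrow> l!i < (l!j::nat)"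
  by (simp add: sorted_wrt_iff_nth_less)

lemma sw_le: "sorted_wrt (<) l \<Longrightarrow> i \<le> j \<Longrightarrow> j < length l \<Longrightarrow> l!i \<le> (l!j::nat)"
  by (metis le_less sw_less)

lemma sw_less_iff: "sorted_wrt (<) l \<Longrightarrow> i < length l \<Longrightarrow> j < length l \<Longrightarrow> (l!i < (l!j::nat)) = (i < j)"
  by (metis linorder_neqE_nat not_less_iff_gr_or_eq sw_less)

lemma cnt_ge:
  assumes s: "sorted_wrt (<) l" and pos: "\<forall>v\<in>set l. 1 \<le> v" and m: "m < length l" and li: "l!m \<le> i"
  shows "Suc m \<le> cnt l i"
proof -
  have d: "distinct l" using s by (simp add: strict_sorted_iff)
  have sub: "(\<lambda>j. l!j) ` {..m} \<subseteq> set l \<inter> {1..i}"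
  proof
    fix v assume "v \<in> (\<lambda>j. l!j) ` {..m}"
    then obtain j where j: "j \<le> m" "v = l!j" by auto
    have "l!j \<le> l!m" using sw_le[OF s j(1) m] .
    moreover have "l!j \<in> set l" using j m by auto
    ultimately show "v \<in> set l \<inter> {1..i}" using j pos li by auto
  qed
  have inj: "inj_on (\<lambda>j. l!j) {..m}"
    using d m by (auto simp: inj_on_def nth_eq_iff_index_eq)
  have "card ((\<lambda>j. l!j) ` {..m}) = Suc m" using card_image[OF inj] by simp
  moreover have "card ((\<lambda>j. l!j) ` {..m}) \<le> cnt l i"
    unfolding cnt_def by (rule card_mono[OF _ sub]) auto
  ultimately show ?thesis by simp
qed

lemma cnt_le:
  assumes s: "sorted_wrt (<) l" and m: "m \<le> length l" and li: "m < length l \<Longrightarrow> i < l!m"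
  shows "cnt l i \<le> m"
proof -
  have sub: "set l \<inter> {1..i} \<subseteq> (\<lambda>j. l!j) ` {..<m}"
  proof
    fix v assume v: "v \<in> set l \<inter> {1..i}"
    then obtain j where j: "j < length l" "v = l!j" by (auto simp: in_set_conv_nth)
    have "j < m"
    proof (rule ccontr)
      assume "\<not> j < m"
      then have "m < length l" "l!m \<le> l!j" using j m sw_le[OF s, of m j] by auto
      then show False using li v j by auto
    qed
    then show "v \<in> (\<lambda>j. l!j) ` {..<m}" using j by auto
  qed
  have "cnt l i \<le> card ((\<lambda>j. l!j) ` {..<m})" unfolding cnt_def by (rule card_mono[OF _ sub]) auto
  also have "\<dots> \<le> card {..<m}" by (rule card_image_le) auto
  finally show ?thesis by simp
qed

lemma cnt_len: "sorted_wrt (<) l \<Longrightarrow> cnt l i \<le> length l"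
  by (rule cnt_le) auto

lemma cnt_eq:
  assumes s: "sorted_wrt (<) l" and pos: "\<forall>v\<in>set l. 1 \<le> v" and m: "m \<le> length l"
    and lo: "\<And>m'. m = Suc m' \<Longrightarrow> l!m' \<le> i" and hi: "m < length l \<Longrightarrow> i < l!m"
  shows "cnt l i = m"
proof -
  have "cnt l i \<le> m" using cnt_le[OF s m hi] by simp
  moreover have "m \<le> cnt l i"
  proof (cases m)
    case (Suc m')
    then show ?thesis using cnt_ge[OF s pos, of m' i] lo m by auto
  qed simp
  ultimately show ?thesis by simp
qed

lemma interlace_valid:
  assumes sy: "sorted_wrt (<) y" and sx: "sorted_wrt (<) x"
    and py: "\<forall>v\<in>set y. 1 \<le> v" and px: "\<forall>v\<in>set x. 1 \<le> v"
    and il: "interlace y x"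
  shows "int (cnt y i) - int (cnt x i) = 0 \<or> int (cnt y i) - int (cnt x i) = 1"
proof -
  have ly: "length y = Suc (length x)" and il2: "\<And>j. j < length x \<Longrightarrow> y!j \<le> x!j \<and> x!j \<le> y!Suc j"
    using il by (auto simp: interlace_def)
  define m where "m = cnt y i"
  have mle: "m \<le> length y" using cnt_len[OF sy] m_def by simp
  have hiy: "m < length y \<Longrightarrow> i < y!m"
  proof (rule ccontr)
    assume "m < length y" "\<not> i < y!m"
    then show False using cnt_ge[OF sy py, of m i] m_def by simp
  qed
  have loy: "y!m' \<le> i" if mm: "m = Suc m'" for m'
  proof (rule ccontr)
    assume "\<not> y!m' \<le> i"
    then have "cnt y i \<le> m'" using cnt_le[OF sy, of m' i] mm mle by simp
    then show False using mm m_def by simp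
  qed
  have up: "cnt x i \<le> m"
  proof (cases "m < length x")
    case True
    then have "i < x!m" using hiy il2[of m] ly by force
    then show ?thesis using cnt_le[OF sx, of m i] True by simp
  next
    case False
    then show ?thesis using cnt_len[OF sx, of i] by simp
  qed
  have lo: "m \<le> Suc (cnt x i)"
  proof (cases m)
    case (Suc m')
    show ?thesis
    proof (cases m')
      case (Suc m'')
      have "m'' < length x" using mle ly \<open>m = Suc m'\<close> Suc by simp
      then have "x!m'' \<le> i" using il2[of m''] loy[of m'] \<open>m = Suc m'\<close> Suc by force
      then show ?thesis using cnt_ge[OF sx px \<open>m'' < length x\<close>] \<open>m = Suc m'\<close> Suc by simp
    qed (use Suc in simp)
  qed simp
  show ?thesis using up lo m_def by linarith
qed

lemma valid_interlace:
  assumes sy: "sorted_wrt (<) y" and sx: "sorted_wrt (<) x"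
    and py: "\<forall>v\<in>set y. 1 \<le> v" and px: "\<forall>v\<in>set x. 1 \<le> v"
    and ly: "length y = Suc (length x)"
    and v: "\<And>i. i \<in> set x \<union> set y \<Longrightarrow> int (cnt y i) - int (cnt x i) = 0 \<or> int (cnt y i) - int (cnt x i) = 1"
  shows "interlace y x"
  unfolding interlace_def
proof (intro conjI[OF ly] allI impI)
  fix j assume j: "j < length x"
  show "y!j \<le> x!j \<and> x!j \<le> y!Suc j"
  proof (rule ccontr)
    assume "\<not> ?thesis"
    then consider "x!j < y!j" | "y!Suc j < x!j" by linarith
    then show False
    proof cases
      case 1
      have a: "Suc j \<le> cnt x (x!j)" using cnt_ge[OF sx px j] by simp
      have b: "cnt y (x!j) \<le> j" using cnt_le[OF sy, of j "x!j"] 1 ly j by simp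
      have "x!j \<in> set x" using j by simp
      then show False using v[of "x!j"] a b by auto
    next
      case 2
      have a: "Suc (Suc j) \<le> cnt y (y!Suc j)" using cnt_ge[OF sy py, of "Suc j"] ly j by simp
      have b: "cnt x (y!Suc j) \<le> j" using cnt_le[OF sx, of j "y!Suc j"] 2 j by simp
      have "y!Suc j \<in> set y" using j ly by simp
      then show False using v[of "y!Suc j"] a b by auto
    qed
  qed
qed


lemma sorted_sub_idx:
  assumes "sorted_wrt (<) (l::nat list)" "\<forall>i\<in>set is. i < length l" and that: "sorted_wrt (<) is"
  shows "sorted_wrt (<) (map (\<lambda>i. l!i) (filter C is))"
proof -
  have "sorted_wrt (<) (filter C is)" using that by (rule sorted_wrt_filter)
  then show ?thesis unfolding sorted_wrt_map using assms
    by (auto intro: sorted_wrt_mono_rel[of _ "(<)"] simp: sw_less)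
qed

locale segs =
  fixes M :: nat and y x :: "nat list"
  assumes sy: "sorted_wrt (<) y" and sx: "sorted_wrt (<) x"
    and bY: "set y \<subseteq> {1..M}" and bX: "set x \<subseteq> {1..M}"
    and ly: "length y = Suc (length x)" and il: "interlace y x"
begin

lemma il2: "j < length x \<Longrightarrow> y!j \<le> x!j \<and> x!j \<le> y!Suc j"
  using il by (auto simp: interlace_def)

abbreviation "p \<equiv> pseq y x"
abbreviation "q \<equiv> qseq y x"

lemma p_def2: "p = map (\<lambda>i. y!i) (filter (\<lambda>i. \<not> (i < length x \<and> y!i = x!i) \<and> \<not> (1 \<le> i \<and> y!i = x!(i - 1))) [0..<length y])"
  unfolding pseq_def concat_map_if_single ..

lemma q_def2: "q = map (\<lambda>i. x!i) (filter (\<lambda>i. x!i \<noteq> y!i \<and> x!i \<noteq> y!Suc i) [0..<length x])"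
  unfolding qseq_def concat_map_if_single ..

lemma sp: "sorted_wrt (<) p"
  unfolding p_def2 by (rule sorted_sub_idx) (use sy in auto)

lemma sq: "sorted_wrt (<) q"
  unfolding q_def2 by (rule sorted_sub_idx) (use sx in auto)

lemma set_p: "set p = set y - set x"
proof
  show "set p \<subseteq> set y - set x"
  proof
    fix v assume "v \<in> set p"
    then obtain i where i: "i < length y" "v = y!i"
      and c1: "\<not> (i < length x \<and> y!i = x!i)" and c2: "\<not> (1 \<le> i \<and> y!i = x!(i - 1))"
      unfolding p_def2 by auto
    have "v \<notin> set x"
    proof
      assume "v \<in> set x"
      then obtain l where l: "l < length x" "v = x!l" by (auto simp: in_set_conv_nth)
      consider "l < i" | "l = i" | "i < l" by linarith
      then show False
      proof cases
        case 1
        show False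
        proof (cases "Suc l = i")
          case True then show ?thesis using c2 i l by auto
        next
          case False
          then have "y!Suc l < y!i" using sw_less[OF sy, of "Suc l" i] 1 i by simp
          then show ?thesis using il2[OF l(1)] i l by simp
        qed
      next
        case 2 then show ?thesis using c1 i l by auto
      next
        case 3
        then have "x!i < x!l" using sw_less[OF sx] l by simp
        then show ?thesis using il2[of i] 3 l i by simp
      qed
    qed
    then show "v \<in> set y - set x" using i by simp
  qed
next
  show "set y - set x \<subseteq> set p"
  proof
    fix v assume v: "v \<in> set y - set x"
    then obtain i where i: "i < length y" "v = y!i" by (auto simp: in_set_conv_nth)
    have "\<not> (i < length x \<and> y!i = x!i)" using v i by auto
    moreover have "\<not> (1 \<le> i \<and> y!i = x!(i - 1))" 
    proof
      assume h: "1 \<le> i \<and> y!i = x!(i - 1)"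
      then have "i - 1 < length x" using i ly by linarith
      then have "x!(i - 1) \<in> set x" by simp
      then show False using h v i by simp
    qed
    ultimately show "v \<in> set p" unfolding p_def2 using i by auto
  qed
qed

lemma set_q: "set q = set x - set y"
proof
  show "set q \<subseteq> set x - set y"
  proof
    fix v assume "v \<in> set q"
    then obtain i where i: "i < length x" "v = x!i"
      and c: "x!i \<noteq> y!i" "x!i \<noteq> y!Suc i"
      unfolding q_def2 by auto
    have "v \<notin> set y"
    proof
      assume "v \<in> set y"
      then obtain l where l: "l < length y" "v = y!l" by (auto simp: in_set_conv_nth)
      consider "l < i" | "l = i" | "l = Suc i" | "Suc i < l" by linarith
      then show False
      proof cases
        case 1
        then have "y!l < y!i" using sw_less[OF sy] i ly by simp
        then show ?thesis using il2[OF i(1)] i l by simp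
      next
        case 4
        then have "y!Suc i < y!l" using sw_less[OF sy] l by simp
        then show ?thesis using il2[OF i(1)] i l by simp
      qed (use c i l in auto)
    qed
    then show "v \<in> set x - set y" using i by simp
  qed
next
  show "set x - set y \<subseteq> set q"
  proof
    fix v assume v: "v \<in> set x - set y"
    then obtain i where i: "i < length x" "v = x!i" by (auto simp: in_set_conv_nth)
    have "x!i \<noteq> y!i" "x!i \<noteq> y!Suc i" using v i ly by auto
    then show "v \<in> set q" unfolding q_def2 using i by auto
  qed
qed

lemma dy: "distinct y" using sy by (simp add: strict_sorted_iff)
lemma dx: "distinct x" using sx by (simp add: strict_sorted_iff)
lemma dp: "distinct p" using sp by (simp add: strict_sorted_iff)
lemma dq: "distinct q" using sq by (simp add: strict_sorted_iff)

lemma len_p: "length p = Suc (length q)"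
proof -
  have a: "card (set y) = card (set y \<inter> set x) + card (set y - set x)" by (rule card_Int_Diff) simp
  have b: "card (set x) = card (set x \<inter> set y) + card (set x - set y)" by (rule card_Int_Diff) simp
  have "length p = card (set y - set x)" using distinct_card[OF dp] set_p by simp
  moreover have "length q = card (set x - set y)" using distinct_card[OF dq] set_q by simp
  moreover have "card (set y) = Suc (card (set x))" using distinct_card[OF dy] distinct_card[OF dx] ly by simp
  ultimately show ?thesis using a b by (simp add: Int_commute)
qed

lemma py: "\<forall>v\<in>set y. 1 \<le> v" using bY by auto
lemma px: "\<forall>v\<in>set x. 1 \<le> v" using bX by auto
lemma bp: "\<forall>v\<in>set p. 1 \<le> v \<and> v \<le> M" using bY set_p by auto
lemma bq: "\<forall>v\<in>set q. 1 \<le> v \<and> v \<le> M" using bX set_q by auto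

lemma Dc_cnt: "Dc (set y) (set x) i = int (cnt y i) - int (cnt x i)"
  unfolding Dc_def cnt_def ..

lemma Dc_pq: "Dc (set y) (set x) i = int (cnt p i) - int (cnt q i)"
proof -
  have a: "card (set y \<inter> {1..i}) = card (set y \<inter> {1..i} \<inter> set x) + card (set y \<inter> {1..i} - set x)"
    by (rule card_Int_Diff) simp
  have b: "card (set x \<inter> {1..i}) = card (set x \<inter> {1..i} \<inter> set y) + card (set x \<inter> {1..i} - set y)"
    by (rule card_Int_Diff) simp
  have c: "set y \<inter> {1..i} - set x = set p \<inter> {1..i}" "set x \<inter> {1..i} - set y = set q \<inter> {1..i}"
    using set_p set_q by auto
  have d: "set y \<inter> {1..i} \<inter> set x = set x \<inter> {1..i} \<inter> set y" by auto
  show ?thesis unfolding Dc_def cnt_def using a b c d by simp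
qed

lemma valid_all: "Dc (set y) (set x) i = 0 \<or> Dc (set y) (set x) i = 1"
  unfolding Dc_cnt by (rule interlace_valid[OF sy sx py px il])

lemma ilpq: "interlace p q"
  by (rule valid_interlace[OF sp sq]) (use bp bq len_p valid_all Dc_pq in auto)

lemma disj: "set p \<inter> set q = {}" using set_p set_q by auto

lemma strict1: "j < length q \<Longrightarrow> p!j < q!j"
proof -
  assume j: "j < length q"
  have "p!j \<le> q!j" using ilpq j by (auto simp: interlace_def)
  moreover have "p!j \<noteq> q!j" using disj j len_p by (metis disjoint_iff less_SucI nth_mem)
  ultimately show ?thesis by simp
qed

lemma strict2: "j < length q \<Longrightarrow> q!j < p!Suc j"
proof -
  assume j: "j < length q"
  have "q!j \<le> p!Suc j" using ilpq j by (auto simp: interlace_def)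
  moreover have "p!Suc j \<noteq> q!j" using disj j len_p by (metis disjoint_iff Suc_mono nth_mem)
  ultimately show ?thesis by simp
qed

definition qlo where "qlo j = (if j = 0 then 0 else q!(j - 1))"
definition qhi where "qhi j = (if j = length q then M + 1 else q!j)"

lemma p_mem: "j \<le> length q \<Longrightarrow> p!j \<in> set p" using len_p by simp

lemma qlo_lt: "j \<le> length q \<Longrightarrow> qlo j < p!j"
proof (cases j)
  case 0
  assume "j \<le> length q"
  then show ?thesis using bp p_mem[of 0] 0 by (auto simp: qlo_def)
next
  case (Suc j')
  assume "j \<le> length q"
  then show ?thesis using strict2[of j'] Suc by (simp add: qlo_def)
qed

lemma qhi_gt: "j \<le> length q \<Longrightarrow> p!j < qhi j"
proof -
  assume j: "j \<le> length q"
  show ?thesis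
  proof (cases "j = length q")
    case True then show ?thesis using bp p_mem[OF j] by (auto simp: qhi_def)
  next
    case False then show ?thesis using strict1[of j] j by (simp add: qhi_def)
  qed
qed

lemma D0: assumes j: "j \<le> length q" and i: "qlo j \<le> i" "i < p!j"
  shows "Dc (set y) (set x) i = 0"
proof -
  have "cnt p i = j"
  proof (rule cnt_eq[OF sp])
    show "\<forall>v\<in>set p. 1 \<le> v" using bp by auto
    show "j \<le> length p" using j len_p by simp
    show "p!m' \<le> i" if "j = Suc m'" for m'
      using strict1[of m'] that i j by (simp add: qlo_def)
    show "i < p!j" by (rule i(2))
  qed
  moreover have "cnt q i = j"
  proof (rule cnt_eq[OF sq])
    show "\<forall>v\<in>set q. 1 \<le> v" using bq by auto
    show "j \<le> length q" by (rule j)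
    show "q!m' \<le> i" if "j = Suc m'" for m'
      using that i by (simp add: qlo_def)
    show "i < q!j" if "j < length q" using strict1[OF that] i by simp
  qed
  ultimately show ?thesis unfolding Dc_pq by simp
qed

lemma D1: assumes j: "j \<le> length q" and i: "p!j \<le> i" "i < qhi j"
  shows "Dc (set y) (set x) i = 1"
proof -
  have "cnt p i = Suc j"
  proof (rule cnt_eq[OF sp])
    show "\<forall>v\<in>set p. 1 \<le> v" using bp by auto
    show "Suc j \<le> length p" using j len_p by simp
    show "p!m' \<le> i" if "Suc j = Suc m'" for m'
      using that i by simp
    show "i < p!Suc j" if "Suc j < length p"
      using that i strict2[of j] len_p by (simp add: qhi_def)
  qed
  moreover have "cnt q i = j"
  proof (rule cnt_eq[OF sq])
    show "\<forall>v\<in>set q. 1 \<le> v" using bq by auto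
    show "j \<le> length q" by (rule j)
    show "q!m' \<le> i" if "j = Suc m'" for m'
      using that i strict2[of m'] j by simp
    show "i < q!j" if "j < length q" using that i by (simp add: qhi_def)
  qed
  ultimately show ?thesis unfolding Dc_pq by simp
qed

end

definition wtf :: "nat set \<Rightarrow> nat set \<Rightarrow> bool \<Rightarrow> complex \<Rightarrow> complex \<Rightarrow> complex \<Rightarrow> complex
   \<Rightarrow> complex \<Rightarrow> complex \<Rightarrow> nat \<Rightarrow> complex" where
  "wtf Y X v0 cP cQ a1 a2 b1 b2 i = wgen Y X v0 cP cQ a1 a2 b1 b2 i (auxs Y X v0 i) (auxs Y X v0 (i - 1))"

lemma ncount_card: "distinct x \<Longrightarrow> ncount x al be = card (set x \<inter> {al<..<be})"
proof -
  assume d: "distinct x"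
  have "(\<lambda>l. x!l) ` {l. l < length x \<and> al < x!l \<and> x!l < be} = set x \<inter> {al<..<be}"
    by (auto simp: in_set_conv_nth)
  moreover have "inj_on (\<lambda>l. x!l) {l. l < length x \<and> al < x!l \<and> x!l < be}"
    using d by (auto simp: inj_on_def nth_eq_iff_index_eq)
  ultimately show ?thesis unfolding ncount_def by (metis card_image)
qed

lemma prod_seg:
  assumes h: "\<And>i. al < i \<Longrightarrow> i < be \<Longrightarrow> hh i = (if i \<in> set x then w1 else (w2::complex))"
    and d: "distinct x"
  shows "(\<Prod>i\<in>{al<..<be}. hh i) = w1 ^ ncount x al be * w2 ^ (be - al - 1 - ncount x al be)"
proof -
  have "(\<Prod>i\<in>{al<..<be}. hh i) = (\<Prod>i\<in>{al<..<be}. if i \<in> set x then w1 else w2)"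
    by (rule prod.cong) (auto simp: h)
  also have "\<dots> = (\<Prod>i\<in>{al<..<be} \<inter> {i. i \<in> set x}. w1) * (\<Prod>i\<in>{al<..<be} \<inter> - {i. i \<in> set x}. w2)"
    by (rule prod.If_cases) simp
  also have "\<dots> = w1 ^ card ({al<..<be} \<inter> set x) * w2 ^ card ({al<..<be} - set x)"
    by (simp add: Diff_eq)
  also have "card ({al<..<be} \<inter> set x) = ncount x al be"
    using ncount_card[OF d] by (simp add: Int_commute)
  also have "card ({al<..<be} - set x) = be - al - 1 - ncount x al be"
  proof -
    have "card {al<..<be} = card ({al<..<be} \<inter> set x) + card ({al<..<be} - set x)"
      by (rule card_Int_Diff) simp
    then show ?thesis using ncount_card[OF d] by (simp add: Int_commute)
  qed
  finally show ?thesis .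
qed

lemma prod_split3:
  assumes "al < ga" "ga < (be::nat)"
  shows "(\<Prod>i\<in>{al<..<be}. hh i) = (\<Prod>i\<in>{al<..<ga}. hh i) * hh ga * (\<Prod>i\<in>{ga<..<be}. (hh i :: complex))"
proof -
  have e: "{al<..<be} = {al<..<ga} \<union> ({ga} \<union> {ga<..<be})" using assms by auto
  show ?thesis unfolding e
    by (subst prod.union_disjoint; simp?; subst prod.union_disjoint; auto simp: mult_ac)
qed

context segs
begin

context
  fixes v0 :: bool and cP cQ a1 a2 b1 b2 :: complex
begin

abbreviation "wt \<equiv> wtf (set y) (set x) v0 cP cQ a1 a2 b1 b2"

lemma Dc_eq_mem: "Dc (set y) (set x) (Suc i) = Dc (set y) (set x) i \<Longrightarrow> (Suc i \<in> set y) = (Suc i \<in> set x)"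
  unfolding Dc_Suc[of _ _ i] by (auto split: if_splits)

lemma wt_low: assumes j: "j \<le> length q" and i: "qlo j < i" "i < p!j"
  shows "wt i = (if i \<in> set x then b1 else b2)"
proof -
  obtain i' where i': "i = Suc i'" using i by (cases i) auto
  have a: "Dc (set y) (set x) i = 0" using D0[OF j] i by simp
  have b: "Dc (set y) (set x) i' = 0" using D0[OF j, of i'] i i' by simp
  have "(i \<in> set y) = (i \<in> set x)" using Dc_eq_mem[of i'] a b i' by simp
  then show ?thesis using a b i' by (auto simp: wtf_def wgen_def auxs_def)
qed

lemma wt_high: assumes j: "j \<le> length q" and i: "p!j < i" "i < qhi j"
  shows "wt i = (if i \<in> set x then a1 else a2)"
proof -
  obtain i' where i': "i = Suc i'" using i by (cases i) auto
  have a: "Dc (set y) (set x) i = 1" using D1[OF j] i by simp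
  have b: "Dc (set y) (set x) i' = 1" using D1[OF j, of i'] i i' by simp
  have "(i \<in> set y) = (i \<in> set x)" using Dc_eq_mem[of i'] a b i' by simp
  then show ?thesis using a b i' by (auto simp: wtf_def wgen_def auxs_def)
qed

lemma wt_p: assumes j: "j \<le> length q" shows "wt (p!j) = cP"
proof -
  have a: "Dc (set y) (set x) (p!j) = 1" using D1[OF j] qhi_gt[OF j] by simp
  have b: "Dc (set y) (set x) (p!j - 1) = 0" using D0[OF j, of "p!j - 1"] qlo_lt[OF j] by simp
  have "p!j \<in> set y - set x" using p_mem[OF j] set_p by simp
  then show ?thesis using a b by (auto simp: wtf_def wgen_def auxs_def)
qed

lemma wt_q: assumes j: "j < length q" shows "wt (q!j) = cQ"
proof -
  have a: "Dc (set y) (set x) (q!j) = 0" using D0[of "Suc j" "q!j"] j strict2[OF j] by (simp add: qlo_def)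
  have b: "Dc (set y) (set x) (q!j - 1) = 1" using D1[of j "q!j - 1"] j strict1[OF j] by (simp add: qhi_def)
  have "q!j \<in> set x - set y" using j set_q by (metis nth_mem)
  then show ?thesis using a b by (auto simp: wtf_def wgen_def auxs_def)
qed

definition seg where
  "seg j = a1 ^ ncount x (p!j) (qhi j) * a2 ^ (qhi j - p!j - 1 - ncount x (p!j) (qhi j))
         * b1 ^ ncount x (qlo j) (p!j) * b2 ^ (p!j - qlo j - 1 - ncount x (qlo j) (p!j))"

lemma prod_segment: assumes j: "j \<le> length q"
  shows "(\<Prod>i\<in>{qlo j<..<qhi j}. wt i) = cP * seg j"
proof -
  have "(\<Prod>i\<in>{qlo j<..<qhi j}. wt i) = (\<Prod>i\<in>{qlo j<..<p!j}. wt i) * wt (p!j) * (\<Prod>i\<in>{p!j<..<qhi j}. wt i)"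
    by (rule prod_split3[OF qlo_lt[OF j] qhi_gt[OF j]])
  also have "(\<Prod>i\<in>{qlo j<..<p!j}. wt i) = b1 ^ ncount x (qlo j) (p!j) * b2 ^ (p!j - qlo j - 1 - ncount x (qlo j) (p!j))"
    by (rule prod_seg[OF _ dx]) (rule wt_low[OF j])
  also have "(\<Prod>i\<in>{p!j<..<qhi j}. wt i) = a1 ^ ncount x (p!j) (qhi j) * a2 ^ (qhi j - p!j - 1 - ncount x (p!j) (qhi j))"
    by (rule prod_seg[OF _ dx]) (rule wt_high[OF j])
  finally show ?thesis unfolding wt_p[OF j] seg_def by (simp add: mult_ac)
qed

lemma prod_upto: "j \<le> length q \<Longrightarrow> (\<Prod>i\<in>{0<..<qhi j}. wt i) = cP ^ Suc j * cQ ^ j * (\<Prod>j'\<in>{..j}. seg j')"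
proof (induction j)
  case 0
  then show ?case using prod_segment[of 0] by (simp add: qlo_def)
next
  case (Suc j)
  have jl: "j < length q" using Suc.prems by simp
  have qj: "qhi j = q!j" using jl by (simp add: qhi_def)
  have ql: "qlo (Suc j) = q!j" by (simp add: qlo_def)
  have pos: "0 < q!j" using bq jl by (metis nth_mem le_less_trans less_one not_le)
  have lt: "q!j < qhi (Suc j)" using strict2[OF jl] qhi_gt[OF Suc.prems] by simp
  have "(\<Prod>i\<in>{0<..<qhi (Suc j)}. wt i) = (\<Prod>i\<in>{0<..<q!j}. wt i) * wt (q!j) * (\<Prod>i\<in>{q!j<..<qhi (Suc j)}. wt i)"
    by (rule prod_split3[OF pos lt])
  also have "\<dots> = (cP ^ Suc j * cQ ^ j * (\<Prod>j'\<in>{..j}. seg j')) * cQ * (cP * seg (Suc j))"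
    using Suc.IH jl qj wt_q[OF jl] prod_segment[OF Suc.prems] ql by simp
  finally show ?case by (simp add: mult_ac)
qed

lemma prod_all: "(\<Prod>i\<in>{1..M}. wt i) = cP ^ Suc (length q) * cQ ^ length q * wprod M y x a1 a2 b1 b2"
proof -
  have e: "{1..M} = {0<..<qhi (length q)}" by (auto simp: qhi_def)
  have w: "wprod M y x a1 a2 b1 b2 = (\<Prod>j'\<in>{..length q}. seg j')"
    unfolding wprod_def One_nat_def prod.shift_bounds_cl_Suc_ivl atMost_atLeast0
    apply (rule prod.cong[OF refl])
    subgoal for j
    proof -
      assume "j \<in> {0..length q}"
      then have j: "j \<le> length q" by simp
      have 1: "pj y x (Suc j) = p!j" by (simp add: pj_def)
      have 2: "qj M y x (Suc j) = qhi j" using j by (auto simp: qj_def qhi_def)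
      have 3: "qj M y x j = qlo j" using j by (auto simp: qj_def qlo_def)
      have 4: "Suc j - Suc 0 = j" by simp
      show ?thesis by (simp only: diff_Suc_1 1 2 3 4 seg_def One_nat_def)
    qed
    done
  show ?thesis unfolding e w by (rule prod_upto) simp
qed

end

end

lemma generic:
  assumes w: "\<And>i g s. 1 \<le> i \<Longrightarrow> i \<le> M \<Longrightarrow> w i g s = wgen (set y) (set x) v0 cP cQ a1 a2 b1 b2 i g s"
    and sy: "sorted_wrt (<) y" and sx: "sorted_wrt (<) x"
    and bY: "set y \<subseteq> {1..M}" and bX: "set x \<subseteq> {1..M}"
    and ly: "length y = Suc (length x)"
  shows "TG w M (\<not> v0) v0 = (if interlace y x then cP ^ Suc (length (qseq y x)) * cQ ^ length (qseq y x)
     * wprod M y x a1 a2 b1 b2 else 0)"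
proof -
  let ?V = "\<forall>i\<le>M. Dc (set y) (set x) i = 0 \<or> Dc (set y) (set x) i = 1"
  have T: "TG w M (\<not> v0) v0 = (if ?V \<and> (\<not> v0) = auxs (set y) (set x) v0 M
     then (\<Prod>i\<in>{1..M}. wgen (set y) (set x) v0 cP cQ a1 a2 b1 b2 i (auxs (set y) (set x) v0 i) (auxs (set y) (set x) v0 (i - 1))) else 0)"
    by (rule TG_main[OF w]) auto
  have dy: "distinct y" using sy by (simp add: strict_sorted_iff)
  have dx: "distinct x" using sx by (simp add: strict_sorted_iff)
  have "set y \<inter> {1..M} = set y" "set x \<inter> {1..M} = set x" using bY bX by auto
  then have "Dc (set y) (set x) M = 1" unfolding Dc_def using distinct_card[OF dy] distinct_card[OF dx] ly by simp
  then have aM: "auxs (set y) (set x) v0 M = (\<not> v0)" by (simp add: auxs_def)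
  show ?thesis
  proof (cases "interlace y x")
    case True
    interpret segs M y x using True sy sx bY bX ly by unfold_locales
    have V: ?V using valid_all by simp
    have "(\<Prod>i\<in>{1..M}. wtf (set y) (set x) v0 cP cQ a1 a2 b1 b2 i) = cP ^ Suc (length q) * cQ ^ length q * wprod M y x a1 a2 b1 b2"
      by (rule prod_all)
    then show ?thesis using T V aM True by (simp add: wtf_def)
  next
    case False
    have nV: "\<not> ?V"
    proof
      assume V: ?V
      have "interlace y x"
      proof (rule valid_interlace[OF sy sx _ _ ly])
        show "\<forall>v\<in>set y. 1 \<le> v" "\<forall>v\<in>set x. 1 \<le> v" using bY bX by auto
        fix i assume "i \<in> set x \<union> set y"
        then have "i \<le> M" using bY bX by auto
        then show "int (cnt y i) - int (cnt x i) = 0 \<or> int (cnt y i) - int (cnt x i) = 1"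
          using V unfolding Dc_def cnt_def by simp
      qed
      then show False using False by simp
    qed
    have "TG w M (\<not> v0) v0 = 0" unfolding T using nV by (intro if_not_P) blast
    then show ?thesis using False by simp
  qed
qed

theorem mainTheorem13:
  fixes t a b c d e f u :: complex and M N :: nat and x y xb yb :: "nat list"
  assumes "t \<noteq> 0" "a \<noteq> 0" "b \<noteq> 0" "c \<noteq> 0" "d \<noteq> 0" "e \<noteq> 0" "f \<noteq> 0" "t \<noteq> 1"
    and "c*d + a*f = 0" and "t*c*d + b*e = 0"
    and "int N \<le> int M - 1"
    and "sorted_wrt (<) x" "length x = N" "set x \<subseteq> {1..M}"
    and "sorted_wrt (<) y" "length y = N + 1" "set y \<subseteq> {1..M}"
    and "sorted_wrt (<) xb" "length xb = N" "set xb \<subseteq> {1..M}"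
    and "sorted_wrt (<) yb" "length yb = N + 1" "set yb \<subseteq> {1..M}"
  shows "Bel t a b c d e f M u (particles y) (particles x) = Gf t a b c d e f M y x u
       \<and> Bel t a b c d e f M u (holes M xb) (holes M yb) = Hf t a b c d e f M yb xb u
       \<and> Cel t a b c d e f M u (particles x) (particles y) = Gbar t a b c d e f M y x u
       \<and> Cel t a b c d e f M u (holes M yb) (holes M xb) = Hbar t a b c d e f M yb xb u"
proof (intro conjI)
  have ly: "length y = Suc (length x)" "length yb = Suc (length xb)" using assms by auto
  show "Bel t a b c d e f M u (particles y) (particles x) = Gf t a b c d e f M y x u"
  proof -
    have "TG (\<lambda>k g s. Lent t a b c d e f u g (k \<in> set y) s (k \<in> set x)) M (\<not> True) True =
      (if interlace y x then ((1-t)*c*u) ^ Suc (length (qseq y x)) * ((1-t)*d) ^ length (qseq y x)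
     * wprod M y x (a*t*u+b) (a*u+b) (e*u+t*f) (e*u+f) else 0)"
      by (rule generic) (use assms ly in \<open>auto simp: Lent_def wgen_def\<close>)
    then show ?thesis unfolding Bel_def Gf_def particles_def Tpart_TG by simp
  qed
  show "Bel t a b c d e f M u (holes M xb) (holes M yb) = Hf t a b c d e f M yb xb u"
  proof -
    have "TG (\<lambda>k g s. Lent t a b c d e f u g (k \<in> holes M xb) s (k \<in> holes M yb)) M (\<not> True) True =
      (if interlace yb xb then ((1-t)*c*u) ^ Suc (length (qseq yb xb)) * ((1-t)*d) ^ length (qseq yb xb)
     * wprod M yb xb (a*u+b) (a*t*u+b) (e*u+f) (e*u+t*f) else 0)"
      by (rule generic) (use assms ly in \<open>auto simp: Lent_def wgen_def holes_def\<close>)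
    then show ?thesis unfolding Bel_def Hf_def Tpart_TG by simp
  qed
  show "Cel t a b c d e f M u (particles x) (particles y) = Gbar t a b c d e f M y x u"
  proof -
    have "TG (\<lambda>k g s. Lent t a b c d e f u g (k \<in> set x) s (k \<in> set y)) M (\<not> False) False =
      (if interlace y x then ((1-t)*d) ^ Suc (length (qseq y x)) * ((1-t)*c*u) ^ length (qseq y x)
     * wprod M y x (e*u+t*f) (e*u+f) (a*t*u+b) (a*u+b) else 0)"
      by (rule generic) (use assms ly in \<open>auto simp: Lent_def wgen_def\<close>)
    then show ?thesis unfolding Cel_def Gbar_def particles_def Tpart_TG by simp
  qed
  show "Cel t a b c d e f M u (holes M yb) (holes M xb) = Hbar t a b c d e f M yb xb u"
  proof -
    have "TG (\<lambda>k g s. Lent t a b c d e f u g (k \<in> holes M yb) s (k \<in> holes M xb)) M (\<not> False) False =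
      (if interlace yb xb then ((1-t)*d) ^ Suc (length (qseq yb xb)) * ((1-t)*c*u) ^ length (qseq yb xb)
     * wprod M yb xb (e*u+f) (e*u+t*f) (a*u+b) (a*t*u+b) else 0)"
      by (rule generic) (use assms ly in \<open>auto simp: Lent_def wgen_def holes_def\<close>)
    then show ?thesis unfolding Cel_def Hbar_def Tpart_TG by simp
  qed
qed

end
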